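(* Let $A$ be a finite nonempty set, $F\subseteq\mathrm{Op}(A)$ and $Q\subseteq\mathrm{gQuord}(A)$. Then (i) $\mathrm{gQuord}(A,F)=\mathrm{gQuord}(A,\mathrm{trl}(F))$; (ii) $\mathrm{Pol}\,Q=(\mathrm{End}\,Q)^{*}$; in particular $(\mathrm{End}\,Q)^{*}$ is a clone and $\mathrm{End}\,Q$ is u-closed.
   Context: $\mathrm{Op}(A)$ is the set of all operations on $A$ of positive finite arity. An operation preserves a relation $\rho\subseteq A^m$ if applying it componentwise to tuples of $\rho$ yields a tuple of $\rho$. $\mathrm{Pol}\,Q$ (resp. $\mathrm{End}\,Q$) is the set of all operations (resp. unary maps) preserving every relation in $Q$. A translation of an $n$-ary $f$ is a unary map $x\mapsto f(a_1,\dots,a_{i-1},x,a_{i+1},\dots,a_n)$ with fixed $a_j\in A$; $\mathrm{trl}(f)$ is the set of translations of $f$ ($\mathrm{trl}(f)=\{f\}$ for unary $f$), $\mathrm{trl}(F)=\bigcup_{f\in F}\mathrm{trl}(f)$, and $M^*:=\{f\in\mathrm{Op}(A)\mid\mathrm{trl}(f)\subseteq M\}$ for $M\subseteq A^A$. A relation $\rho\subseteq A^m$ is a generalized quasiorder if it is reflexive and transitive in the sense: for every $m\times m$-matrix over $A$ whose rows and columns all lie in $\rho$, its diagonal lies in $\rho$. $\mathrm{gQuord}(A)$ is the set of all generalized quasiorders on $A$, and $\mathrm{gQuord}(A,F)$ is the set of those preserved by all $f\in F$. For $M\subseteq A^A$, the u-closure $\overline{M}$ is the intersection of all monoids $N$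 with $M\subseteq N\le A^A$ such that $N^*$ is a clone; a monoid $M$ is u-closed if $\overline{M}=M$. *)

theory Defs
  imports "HOL-Library.FuncSet"
begin

(* An n-ary operation on A (n >= 1) is a pair (n, f) with f :: 'a list => 'a,
   mapping every list of length n over A into A, and extensional
   (value undefined on all other lists), so that equality of operations is
   equality of the mathematical functions. *)
type_synonym 'a operation = "nat \<times> ('a list \<Rightarrow> 'a)"

definition tuples :: "'a set \<Rightarrow> nat \<Rightarrow> 'a list set" where
  "tuples A n = {xs. length xs = n \<and> set xs \<subseteq> A}"

definition Op :: "'a set \<Rightarrow> 'a operation set" where
  "Op A = {(n, f). 0 < n \<and> (\<forall>xs \<in> tuples A n. f xs \<in> A)
                 \<and> (\<forall>xs. xs \<notin> tuples A n \<longrightarrow> f xs = undefined)}"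

abbreviation maps :: "'a set \<Rightarrow> ('a \<Rightarrow> 'a) set" where
  "maps A \<equiv> A \<rightarrow>\<^sub>E A"

type_synonym 'a relation = "nat \<times> 'a list set"

definition preserves :: "'a operation \<Rightarrow> 'a relation \<Rightarrow> bool" where
  "preserves F R = (case F of (n, f) \<Rightarrow> case R of (m, \<rho>) \<Rightarrow>
     (\<forall>rs. length rs = n \<and> set rs \<subseteq> \<rho> \<longrightarrow>
        map (\<lambda>i. f (map (\<lambda>r. r ! i) rs)) [0..<m] \<in> \<rho>))"

definition preserves_map :: "('a \<Rightarrow> 'a) \<Rightarrow> 'a relation \<Rightarrow> bool" where
  "preserves_map g R = (\<forall>r \<in> snd R. map g r \<in> snd R)"

definition Pol :: "'a set \<Rightarrow> 'a relation set \<Rightarrow> 'a operation set" where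
  "Pol A Q = {f \<in> Op A. \<forall>R \<in> Q. preserves f R}"

definition End :: "'a set \<Rightarrow> 'a relation set \<Rightarrow> ('a \<Rightarrow> 'a) set" where
  "End A Q = {g \<in> maps A. \<forall>R \<in> Q. preserves_map g R}"

definition trl :: "'a set \<Rightarrow> 'a operation \<Rightarrow> ('a \<Rightarrow> 'a) set" where
  "trl A F = (case F of (n, f) \<Rightarrow>
     {restrict (\<lambda>x. f (as[i := x])) A | i as. i < n \<and> as \<in> tuples A n})"

definition trl_set :: "'a set \<Rightarrow> 'a operation set \<Rightarrow> ('a \<Rightarrow> 'a) set" where
  "trl_set A Fs = (\<Union>f \<in> Fs. trl A f)"

definition star :: "'a set \<Rightarrow> ('a \<Rightarrow> 'a) set \<Rightarrow> 'a operation set" where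
  "star A M = {f \<in> Op A. trl A f \<subseteq> M}"

definition gQuord :: "'a set \<Rightarrow> 'a relation set" where
  "gQuord A = {(m, \<rho>). 0 < m \<and> \<rho> \<subseteq> tuples A m
     \<and> (\<forall>a \<in> A. replicate m a \<in> \<rho>)
     \<and> (\<forall>M :: nat \<Rightarrow> nat \<Rightarrow> 'a.
          (\<forall>i<m. \<forall>j<m. M i j \<in> A)
          \<and> (\<forall>i<m. map (\<lambda>j. M i j) [0..<m] \<in> \<rho>)
          \<and> (\<forall>j<m. map (\<lambda>i. M i j) [0..<m] \<in> \<rho>)
          \<longrightarrow> map (\<lambda>i. M i i) [0..<m] \<in> \<rho>)}"

definition gQuord_ops :: "'a set \<Rightarrow> 'a operation set \<Rightarrow> 'a relation set" where
  "gQuord_ops A Fs = {R \<in> gQuord A. \<forall>f \<in> Fs. preserves f R}"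

definition gQuord_maps :: "'a set \<Rightarrow> ('a \<Rightarrow> 'a) set \<Rightarrow> 'a relation set" where
  "gQuord_maps A M = {R \<in> gQuord A. \<forall>g \<in> M. preserves_map g R}"

definition proj :: "'a set \<Rightarrow> nat \<Rightarrow> nat \<Rightarrow> 'a operation" where
  "proj A n i = (n, \<lambda>xs. if xs \<in> tuples A n then xs ! i else undefined)"

definition comp_op :: "'a set \<Rightarrow> 'a operation \<Rightarrow> nat \<Rightarrow> 'a operation list \<Rightarrow> 'a operation" where
  "comp_op A F k gs = (k, \<lambda>xs. if xs \<in> tuples A k
       then snd F (map (\<lambda>g. snd g xs) gs) else undefined)"

definition clone :: "'a set \<Rightarrow> 'a operation set \<Rightarrow> bool" where
  "clone A C = (C \<subseteq> Op A
     \<and> (\<forall>n i. 0 < n \<and> i < n \<longrightarrow> proj A n i \<in> C)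
     \<and> (\<forall>f \<in> C. \<forall>k gs. 0 < k \<and> length gs = fst f \<and> set gs \<subseteq> C \<and> (\<forall>g \<in> set gs. fst g = k)
           \<longrightarrow> comp_op A f k gs \<in> C))"

definition monoid_on :: "'a set \<Rightarrow> ('a \<Rightarrow> 'a) set \<Rightarrow> bool" where
  "monoid_on A N = (N \<subseteq> maps A \<and> restrict id A \<in> N
     \<and> (\<forall>f \<in> N. \<forall>g \<in> N. compose A f g \<in> N))"

definition u_closure :: "'a set \<Rightarrow> ('a \<Rightarrow> 'a) set \<Rightarrow> ('a \<Rightarrow> 'a) set" where
  "u_closure A M = \<Inter>{N. M \<subseteq> N \<and> monoid_on A N \<and> clone A (star A N)}"

definition u_closed :: "'a set \<Rightarrow> ('a \<Rightarrow> 'a) set \<Rightarrow> bool" where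
  "u_closed A M = (monoid_on A M \<and> u_closure A M = M)"

end

theory Submission
  imports Defs
begin

lemma gq_len: "(m,\<rho>) \<in> gQuord A \<Longrightarrow> r \<in> \<rho> \<Longrightarrow> length r = m \<and> set r \<subseteq> A"
  unfolding gQuord_def tuples_def by auto

lemma gq_refl: "(m,\<rho>) \<in> gQuord A \<Longrightarrow> a \<in> A \<Longrightarrow> replicate m a \<in> \<rho>"
  unfolding gQuord_def by auto

lemma gq_trans: "(m,\<rho>) \<in> gQuord A \<Longrightarrow> (\<And>i j. i<m \<Longrightarrow> j<m \<Longrightarrow> M i j \<in> A)
  \<Longrightarrow> (\<And>i. i<m \<Longrightarrow> map (\<lambda>j. M i j) [0..<m] \<in> \<rho>)
  \<Longrightarrow> (\<And>j. j<m \<Longrightarrow> map (\<lambda>i. M i j) [0..<m] \<in> \<rho>)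
  \<Longrightarrow> map (\<lambda>i. M i i) [0..<m] \<in> \<rho>"
  unfolding gQuord_def by auto

lemma op_in: "(n,f) \<in> Op A \<Longrightarrow> length xs = n \<Longrightarrow> set xs \<subseteq> A \<Longrightarrow> f xs \<in> A"
  unfolding Op_def tuples_def by auto

lemma trl_pres_imp_pres:
  assumes R: "(m,\<rho>) \<in> gQuord A" and f: "(n,f) \<in> Op A"
    and T: "\<forall>g\<in>trl A (n,f). preserves_map g (m,\<rho>)"
  shows "preserves (n,f) (m,\<rho>)"
proof -
  have Tg: "map (restrict (\<lambda>x. f (as[i := x])) A) r \<in> \<rho>"
    if "i < n" "length as = n" "set as \<subseteq> A" "r \<in> \<rho>" for i as r
  proof -
    have "restrict (\<lambda>x. f (as[i := x])) A \<in> trl A (n,f)"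
      unfolding trl_def tuples_def using that by auto
    thus ?thesis using T that unfolding preserves_map_def by auto
  qed
  have main: "\<forall>c. length c = n \<and> set c \<subseteq> A \<longrightarrow>
      map (\<lambda>j. f (map (\<lambda>l. if l<k then rs!l!j else c!l) [0..<n])) [0..<m] \<in> \<rho>"
    if rs: "length rs = n" "set rs \<subseteq> \<rho>" and "k \<le> n" for rs k
    using \<open>k \<le> n\<close>
  proof (induction k)
    case 0
    show ?case
    proof (intro allI impI)
      fix c :: "'a list" assume c: "length c = n \<and> set c \<subseteq> A"
      have "map (\<lambda>j. f (map (\<lambda>l. if l<0 then rs!l!j else c!l) [0..<n])) [0..<m]
          = replicate m (f c)"
        using c by (intro nth_equalityI) (auto intro!: arg_cong[where f=f] nth_equalityI)
      moreover have "f c \<in> A" using op_in[OF f] c by auto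
      ultimately show "map (\<lambda>j. f (map (\<lambda>l. if l<0 then rs!l!j else c!l) [0..<n])) [0..<m] \<in> \<rho>"
        using gq_refl[OF R] by simp
    qed
  next
    case (Suc k)
    have kn: "k < n" using Suc by simp
    have rsl: "length (rs!l) = m \<and> set (rs!l) \<subseteq> A" if "l < n" for l
      using gq_len[OF R] rs that by (metis nth_mem subsetD)
    have rslj: "rs!l!j \<in> A" if "l<n" "j<m" for l j using rsl[OF that(1)] that(2) by auto
    show ?case
    proof (intro allI impI)
      fix c :: "'a list" assume c: "length c = n \<and> set c \<subseteq> A"
      have cA: "c!l \<in> A" if "l<n" for l using c that by (metis nth_mem subsetD)
      define M where "M = (\<lambda>j j'. f (map (\<lambda>l. if l<k then rs!l!j else if l = k then rs!k!j' else c!l) [0..<n]))"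
      have argA: "set (map (\<lambda>l. if l<k then rs!l!j else if l = k then rs!k!j' else c!l) [0..<n]) \<subseteq> A"
        if "j<m" "j'<m" for j j'
        using that kn by (auto simp: set_conv_nth intro!: rslj cA)
      have MA: "M j j' \<in> A" if "j<m" "j'<m" for j j'
        unfolding M_def by (rule op_in[OF f]) (simp, rule argA[OF that])
      have rows: "map (\<lambda>j'. M j j') [0..<m] \<in> \<rho>" if "j<m" for j
      proof -
        define as where "as = map (\<lambda>l. if l<k then rs!l!j else c!l) [0..<n]"
        have asA: "length as = n" "set as \<subseteq> A" unfolding as_def using c that kn
          by (auto simp: set_conv_nth intro!: rslj cA)
        have "map (restrict (\<lambda>x. f (as[k := x])) A) (rs!k) = map (\<lambda>j'. M j j') [0..<m]"
        proof (rule nth_equalityI)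
          show "length (map (restrict (\<lambda>x. f (as[k := x])) A) (rs!k)) = length (map (\<lambda>j'. M j j') [0..<m])"
            using rsl[OF kn] by simp
          fix i assume "i < length (map (restrict (\<lambda>x. f (as[k := x])) A) (rs!k))"
          hence i: "i < m" using rsl[OF kn] by simp
          have upd: "as[k := rs!k!i] = map (\<lambda>l. if l<k then rs!l!j else if l = k then rs!k!i else c!l) [0..<n]"
            unfolding as_def by (rule nth_equalityI) (auto simp: nth_list_update)
          show "map (restrict (\<lambda>x. f (as[k := x])) A) (rs!k) ! i = map (\<lambda>j'. M j j') [0..<m] ! i"
          proof -
            have e: "map (\<lambda>j'. M j j') [0..<m] ! i = M j i" using i by simp
            show ?thesis using upd i rsl[OF kn] rslj[OF kn i] unfolding e unfolding M_def by simp
          qed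
        qed
        thus ?thesis using Tg[OF kn asA, of "rs!k"] rs kn by (metis nth_mem subsetD)
      qed
      have cols: "map (\<lambda>j. M j j') [0..<m] \<in> \<rho>" if "j'<m" for j'
      proof -
        have c': "length (c[k := rs!k!j']) = n \<and> set (c[k := rs!k!j']) \<subseteq> A"
          using c rslj[OF kn that] by (auto dest: set_update_subset_insert[THEN subsetD])
        have eq: "map (\<lambda>j. f (map (\<lambda>l. if l<k then rs!l!j else (c[k := rs!k!j'])!l) [0..<n])) [0..<m]
            = map (\<lambda>j. M j j') [0..<m]"
          unfolding M_def using c kn
          by (intro map_cong refl arg_cong[where f=f]) (auto simp: nth_list_update)
        have "k \<le> n" using Suc.prems by simp
        from Suc.IH[rule_format, OF this c'] show ?thesis unfolding eq .
      qed
      have "map (\<lambda>i. M i i) [0..<m] \<in> \<rho>" by (rule gq_trans[OF R MA rows cols])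
      moreover have "map (\<lambda>i. M i i) [0..<m] =
          map (\<lambda>j. f (map (\<lambda>l. if l<Suc k then rs!l!j else c!l) [0..<n])) [0..<m]"
        unfolding M_def by (intro map_cong refl arg_cong[where f=f]) (auto simp: less_Suc_eq)
      ultimately show "map (\<lambda>j. f (map (\<lambda>l. if l<Suc k then rs!l!j else c!l) [0..<n])) [0..<m] \<in> \<rho>"
        by simp
    qed
  qed
  show ?thesis unfolding preserves_def prod.case
  proof (intro allI impI)
    fix rs :: "'a list list" assume rs0: "length rs = n \<and> set rs \<subseteq> \<rho>"
    hence rs: "length rs = n" "set rs \<subseteq> \<rho>" by auto
    have "0 < n" using f unfolding Op_def by auto
    hence "rs!0 \<in> \<rho>" using rs by (metis nth_mem subsetD)
    moreover have "0 < m" using R unfolding gQuord_def by auto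
    ultimately have "rs!0!0 \<in> A" using gq_len[OF R] by (metis nth_mem subsetD)
    then obtain a where a: "a \<in> A" by blast
    have "map (\<lambda>j. f (map (\<lambda>l. if l<n then rs!l!j else (replicate n a)!l) [0..<n])) [0..<m] \<in> \<rho>"
      by (rule main[OF rs order_refl, rule_format]) (use a in \<open>auto simp: set_replicate_conv_if\<close>)
    moreover have "map (\<lambda>l. if l<n then rs!l!j else (replicate n a)!l) [0..<n] = map (\<lambda>r. r!j) rs" for j
      using rs by (intro nth_equalityI) auto
    ultimately show "map (\<lambda>i. f (map (\<lambda>r. r ! i) rs)) [0..<m] \<in> \<rho>" by simp
  qed
qed

lemma pres_imp_trl_pres:
  assumes R: "(m,\<rho>) \<in> gQuord A" and f: "(n,f) \<in> Op A"
    and P: "preserves (n,f) (m,\<rho>)" and g: "g \<in> trl A (n,f)"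
  shows "preserves_map g (m,\<rho>)"
proof -
  obtain i as where g: "g = restrict (\<lambda>x. f (as[i := x])) A" and i: "i < n"
    and as: "length as = n" "set as \<subseteq> A"
    using g unfolding trl_def tuples_def by auto
  show ?thesis unfolding preserves_map_def snd_conv
  proof
    fix r assume r: "r \<in> \<rho>"
    have rl: "length r = m" "set r \<subseteq> A" using gq_len[OF R r] by auto
    define rs where "rs = map (\<lambda>l. if l = i then r else replicate m (as!l)) [0..<n]"
    have "length rs = n" unfolding rs_def by simp
    moreover have "set rs \<subseteq> \<rho>" unfolding rs_def using r as
      by (auto intro!: gq_refl[OF R] simp: set_conv_nth)
    ultimately have "map (\<lambda>j. f (map (\<lambda>r. r!j) rs)) [0..<m] \<in> \<rho>"
      using P unfolding preserves_def by auto
    moreover have "map (\<lambda>j. f (map (\<lambda>r. r!j) rs)) [0..<m] = map g r"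
    proof (rule nth_equalityI)
      show "length (map (\<lambda>j. f (map (\<lambda>r. r!j) rs)) [0..<m]) = length (map g r)"
        using rl by simp
      fix j assume "j < length (map (\<lambda>j. f (map (\<lambda>r. r!j) rs)) [0..<m])"
      hence j: "j < m" by simp
      have "r!j \<in> A" using rl j by auto
      moreover have "map (\<lambda>r. r!j) rs = as[i := r!j]"
        unfolding rs_def using as j by (intro nth_equalityI) (auto simp: nth_list_update)
      ultimately show "map (\<lambda>j. f (map (\<lambda>r. r!j) rs)) [0..<m] ! j = map g r ! j"
        using j rl unfolding g by simp
    qed
    ultimately show "map g r \<in> \<rho>" by simp
  qed
qed

lemma pres_iff:
  assumes R: "R \<in> gQuord A" and f: "F \<in> Op A"
  shows "preserves F R \<longleftrightarrow> (\<forall>g\<in>trl A F. preserves_map g R)"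
proof -
  obtain m \<rho> where Rp: "R = (m,\<rho>)" by fastforce
  obtain n f' where Fp: "F = (n,f')" by fastforce
  show ?thesis using R f unfolding Rp Fp
    using pres_imp_trl_pres trl_pres_imp_pres by metis
qed

lemma trl_maps:
  assumes f: "F \<in> Op A" shows "trl A F \<subseteq> maps A"
proof
  fix g assume g: "g \<in> trl A F"
  obtain n f' where Fp: "F = (n,f')" by fastforce
  obtain i as where g: "g = restrict (\<lambda>x. f' (as[i := x])) A" and i: "i < n"
    and as: "length as = n" "set as \<subseteq> A"
    using g unfolding trl_def tuples_def Fp by auto
  show "g \<in> maps A" unfolding g
  proof (rule restrict_PiE_iff[THEN iffD2], intro ballI)
    fix x assume "x \<in> A"
    thus "f' (as[i := x]) \<in> A" using as f unfolding Fp
      by (intro op_in[of n f' A]) (auto dest: set_update_subset_insert[THEN subsetD])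
  qed
qed

lemma proj_Op: "0 < n \<Longrightarrow> i < n \<Longrightarrow> proj A n i \<in> Op A"
  unfolding proj_def Op_def tuples_def by auto

lemma proj_pres:
  assumes R: "(m,\<rho>) \<in> gQuord A" and "i < n"
  shows "preserves (proj A n i) (m,\<rho>)"
  unfolding preserves_def proj_def prod.case
proof (intro allI impI)
  fix rs :: "'a list list" assume rs: "length rs = n \<and> set rs \<subseteq> \<rho>"
  have ri: "rs!i \<in> \<rho>" using rs assms by (metis nth_mem subsetD)
  have "map (\<lambda>j. if map (\<lambda>r. r!j) rs \<in> tuples A n then map (\<lambda>r. r!j) rs ! i else undefined) [0..<m]
      = rs!i"
  proof (rule nth_equalityI)
    show "length (map (\<lambda>j. if map (\<lambda>r. r!j) rs \<in> tuples A n then map (\<lambda>r. r!j) rs ! i else undefined) [0..<m]) = length (rs!i)"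
      using gq_len[OF R ri] by simp
    fix j assume "j < length (map (\<lambda>j. if map (\<lambda>r. r!j) rs \<in> tuples A n then map (\<lambda>r. r!j) rs ! i else undefined) [0..<m])"
    hence j: "j < m" by simp
    have "map (\<lambda>r. r!j) rs \<in> tuples A n" unfolding tuples_def
    proof (auto simp: rs)
      fix r assume "r \<in> set rs"
      hence "r \<in> \<rho>" using rs by auto
      thus "r!j \<in> A" using gq_len[OF R] j by (metis nth_mem subsetD)
    qed
    thus "map (\<lambda>j. if map (\<lambda>r. r!j) rs \<in> tuples A n then map (\<lambda>r. r!j) rs ! i else undefined) [0..<m] ! j = rs!i!j"
      using j rs assms by simp
  qed
  thus "map (\<lambda>j. if map (\<lambda>r. r!j) rs \<in> tuples A n then map (\<lambda>r. r!j) rs ! i else undefined) [0..<m] \<in> \<rho>"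
    using ri by simp
qed

lemma comp_Op:
  assumes f: "f \<in> Op A" and k: "0 < k" and gs: "length gs = fst f" "set gs \<subseteq> Op A"
    "\<forall>g\<in>set gs. fst g = k"
  shows "comp_op A f k gs \<in> Op A"
proof -
  obtain n f' where Fp: "f = (n,f')" by fastforce
  have "f' (map (\<lambda>g. snd g xs) gs) \<in> A" if xs: "xs \<in> tuples A k" for xs
  proof (rule op_in[of n f' A])
    show "(n,f') \<in> Op A" using f Fp by simp
    show "length (map (\<lambda>g. snd g xs) gs) = n" using gs Fp by simp
    show "set (map (\<lambda>g. snd g xs) gs) \<subseteq> A"
    proof
      fix y assume "y \<in> set (map (\<lambda>g. snd g xs) gs)"
      then obtain g where g: "g \<in> set gs" "y = snd g xs" by auto
      obtain k' g' where gp: "g = (k',g')" by fastforce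
      have "k' = k" using gs g gp by force
      hence "(k, g') \<in> Op A" using gs g gp by auto
      thus "y \<in> A" using xs g gp unfolding Op_def by auto
    qed
  qed
  thus ?thesis unfolding comp_op_def Op_def using k Fp by auto
qed

lemma comp_pres:
  assumes R: "(m,\<rho>) \<in> gQuord A" and f: "f \<in> Op A" "preserves f (m,\<rho>)"
    and k: "0 < k" and gs: "length gs = fst f" "set gs \<subseteq> Op A"
    "\<forall>g\<in>set gs. fst g = k" "\<forall>g\<in>set gs. preserves g (m,\<rho>)"
  shows "preserves (comp_op A f k gs) (m,\<rho>)"
  unfolding preserves_def comp_op_def prod.case
proof (intro allI impI)
  fix rs :: "'a list list" assume rs: "length rs = k \<and> set rs \<subseteq> \<rho>"
  have col: "map (\<lambda>r. r!j) rs \<in> tuples A k" if j: "j < m" for j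
    unfolding tuples_def
  proof (auto simp: rs)
    fix r assume "r \<in> set rs"
    hence "r \<in> \<rho>" using rs by auto
    thus "r!j \<in> A" using gq_len[OF R] j by (metis nth_mem subsetD)
  qed
  define ss where "ss = map (\<lambda>g. map (\<lambda>j. snd g (map (\<lambda>r. r!j) rs)) [0..<m]) gs"
  have "length ss = fst f" unfolding ss_def using gs by simp
  moreover have "set ss \<subseteq> \<rho>"
  proof
    fix s assume "s \<in> set ss"
    then obtain g where g: "g \<in> set gs" "s = map (\<lambda>j. snd g (map (\<lambda>r. r!j) rs)) [0..<m]"
      unfolding ss_def by auto
    obtain k' g' where gp: "g = (k',g')" by fastforce
    have "k' = k" using gs g gp by force
    have "preserves g (m,\<rho>)" using gs g by auto
    thus "s \<in> \<rho>" using rs g gp \<open>k' = k\<close> unfolding preserves_def by auto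
  qed
  ultimately have "map (\<lambda>j. snd f (map (\<lambda>s. s!j) ss)) [0..<m] \<in> \<rho>"
    using f(2) unfolding preserves_def by (auto split: prod.splits)
  moreover have "map (\<lambda>j. snd f (map (\<lambda>s. s!j) ss)) [0..<m] =
      map (\<lambda>j. if map (\<lambda>r. r!j) rs \<in> tuples A k then snd f (map (\<lambda>g. snd g (map (\<lambda>r. r!j) rs)) gs) else undefined) [0..<m]"
    using col unfolding ss_def by (intro map_cong refl) (auto intro!: arg_cong[where f="snd f"])
  ultimately show "map (\<lambda>j. if map (\<lambda>r. r!j) rs \<in> tuples A k then snd f (map (\<lambda>g. snd g (map (\<lambda>r. r!j) rs)) gs) else undefined) [0..<m] \<in> \<rho>"
    by simp
qed

lemma Pol_clone:
  assumes Q: "Q \<subseteq> gQuord A" shows "clone A (Pol A Q)"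
  unfolding clone_def
proof (intro conjI allI impI ballI)
  show "Pol A Q \<subseteq> Op A" unfolding Pol_def by auto
next
  fix n i :: nat assume "0 < n \<and> i < n"
  thus "proj A n i \<in> Pol A Q" unfolding Pol_def using Q proj_Op proj_pres
    by (smt (verit, best) mem_Collect_eq subsetD surj_pair)
next
  fix f k gs assume f: "f \<in> Pol A Q" and h: "0 < k \<and> length gs = fst f \<and> set gs \<subseteq> Pol A Q \<and> (\<forall>g\<in>set gs. fst g = k)"
  have gsO: "set gs \<subseteq> Op A" using h unfolding Pol_def by auto
  have fO: "f \<in> Op A" using f unfolding Pol_def by auto
  show "comp_op A f k gs \<in> Pol A Q" unfolding Pol_def
  proof (intro CollectI conjI ballI)
    show "comp_op A f k gs \<in> Op A" using comp_Op[OF fO _ _ gsO] h by auto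
    fix R assume R: "R \<in> Q"
    obtain m \<rho> where Rp: "R = (m,\<rho>)" by fastforce
    show "preserves (comp_op A f k gs) R" unfolding Rp
      apply (rule comp_pres[OF _ fO _ _ _ gsO])
      using Q R Rp f h unfolding Pol_def by auto
  qed
qed

lemma End_monoid:
  assumes Q: "Q \<subseteq> gQuord A" shows "monoid_on A (End A Q)"
  unfolding monoid_on_def
proof (intro conjI ballI)
  show "End A Q \<subseteq> maps A" unfolding End_def by auto
  show "restrict id A \<in> End A Q" unfolding End_def preserves_map_def
  proof (intro CollectI conjI ballI)
    show "restrict id A \<in> maps A" by auto
    fix R r assume R: "R \<in> Q" and r: "r \<in> snd R"
    obtain m \<rho> where Rp: "R = (m,\<rho>)" by fastforce
    have "set r \<subseteq> A" using gq_len[of m \<rho> A r] Q R r Rp by auto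
    hence "map (restrict id A) r = r" by (induction r) auto
    thus "map (restrict id A) r \<in> snd R" using r by simp
  qed
  fix f g assume f: "f \<in> End A Q" and g: "g \<in> End A Q"
  show "compose A f g \<in> End A Q" unfolding End_def preserves_map_def
  proof (intro CollectI conjI ballI)
    show "compose A f g \<in> maps A" using f g unfolding End_def
      by (auto simp: compose_def PiE_iff)
    fix R r assume R: "R \<in> Q" and r: "r \<in> snd R"
    obtain m \<rho> where Rp: "R = (m,\<rho>)" by fastforce
    have "set r \<subseteq> A" using gq_len[of m \<rho> A r] Q R r Rp by auto
    hence eq: "map (compose A f g) r = map f (map g r)" by (induction r) (auto simp: compose_def)
    have "map g r \<in> snd R" using g R r unfolding End_def preserves_map_def by auto
    thus "map (compose A f g) r \<in> snd R" unfolding eq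
      using f R unfolding End_def preserves_map_def by (auto simp del: map_map)
  qed
qed

theorem corollary3p8:
  fixes A :: "'a set" and F :: "'a operation set" and Q :: "'a relation set"
  assumes "finite A" and "A \<noteq> {}" and "F \<subseteq> Op A" and "Q \<subseteq> gQuord A"
  shows "gQuord_ops A F = gQuord_maps A (trl_set A F)
         \<and> Pol A Q = star A (End A Q)
         \<and> clone A (star A (End A Q))
         \<and> u_closed A (End A Q)"
proof -
  have i: "gQuord_ops A F = gQuord_maps A (trl_set A F)"
  proof -
    have "(\<forall>f\<in>F. preserves f R) \<longleftrightarrow> (\<forall>g\<in>(\<Union>f\<in>F. trl A f). preserves_map g R)"
      if R: "R \<in> gQuord A" for R
    proof -
      have "\<And>f. f \<in> F \<Longrightarrow> preserves f R \<longleftrightarrow> (\<forall>g\<in>trl A f. preserves_map g R)"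
        using pres_iff[OF R] assms(3) by blast
      thus ?thesis by blast
    qed
    thus ?thesis unfolding gQuord_ops_def gQuord_maps_def trl_set_def by blast
  qed
  have ii: "Pol A Q = star A (End A Q)"
  proof (rule set_eqI)
    fix f
    show "f \<in> Pol A Q \<longleftrightarrow> f \<in> star A (End A Q)"
    proof (cases "f \<in> Op A")
      case True
      have "(\<forall>R\<in>Q. preserves f R) \<longleftrightarrow> trl A f \<subseteq> End A Q"
        using pres_iff[OF _ True] trl_maps[OF True] assms(4) unfolding End_def by blast
      thus ?thesis unfolding Pol_def star_def using True by blast
    next
      case False
      thus ?thesis unfolding Pol_def star_def by blast
    qed
  qed
  have iii: "clone A (star A (End A Q))" using Pol_clone[OF assms(4)] ii by simp
  have iv: "u_closed A (End A Q)"
    unfolding u_closed_def u_closure_def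
  proof (intro conjI)
    show "monoid_on A (End A Q)" by (rule End_monoid[OF assms(4)])
    show "\<Inter>{N. End A Q \<subseteq> N \<and> monoid_on A N \<and> clone A (star A N)} = End A Q"
      using End_monoid[OF assms(4)] iii by blast
  qed
  show ?thesis using i ii iii iv by blast
qed

end
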